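(* Fix $\nu\in(0,1]$, $k\in\mathbb{N}$, $\lambda_1,\dots,\lambda_k>0$, $\Lambda=\lambda_1+\dots+\lambda_k$. The solution $p_j^\nu(t)$, $j\in\mathbb{N}_0$, $t\ge0$, of the Cauchy problem consisting of the fractional system in the context with $p_0^\nu(0)=1$, $p_j^\nu(0)=0$ for $j\ge1$, is \[ p_j^\nu(t)=\sum_{r=0}^{j}\ \sum_{\substack{\alpha_1+\dots+\alpha_k=r\\ \alpha_1+2\alpha_2+\dots+k\alpha_k=j}}\binom{r}{\alpha_1,\dots,\alpha_k}\lambda_1^{\alpha_1}\cdots\lambda_k^{\alpha_k}\,t^{r\nu}E^{r+1}_{\nu,r\nu+1}(-\Lambda t^\nu), \] where the inner sum is over nonnegative integers $\alpha_1,\dots,\alpha_k$.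
   Context: Caputo derivative: for $0<\nu<1$, $\frac{d^\nu f(t)}{dt^\nu}=\frac{1}{\Gamma(1-\nu)}\int_0^t \frac{f'(s)}{(t-s)^{\nu}}\,ds$; for $\nu=1$ it is $f'(t)$. The system: $\frac{d^\nu p_0^\nu}{dt^\nu}=-\Lambda p_0^\nu$; $\frac{d^\nu p_j^\nu}{dt^\nu}=\sum_{r=1}^{j}\lambda_r p_{j-r}^\nu-\Lambda p_j^\nu$ for $j=1,\dots,k-1$; $\frac{d^\nu p_j^\nu}{dt^\nu}=\sum_{r=1}^{k}\lambda_r p_{j-r}^\nu-\Lambda p_j^\nu$ for $j\ge k$. Generalized Mittag-Leffler function: $E^{\gamma}_{\alpha,\beta}(z)=\sum_{r\ge0}\frac{(\gamma)_r z^r}{r!\,\Gamma(\alpha r+\beta)}$ with Pochhammer symbol $(\gamma)_r=\gamma(\gamma+1)\cdots(\gamma+r-1)$, $(\gamma)_0=1$. *)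

theory Defs
  imports "HOL-Analysis.Analysis"
begin

definition mittag_leffler3 :: "real \<Rightarrow> real \<Rightarrow> real \<Rightarrow> real \<Rightarrow> real" where
  "mittag_leffler3 \<gamma> \<alpha> \<beta> z =
     (\<Sum>r. pochhammer \<gamma> r * z ^ r / (fact r * Gamma (\<alpha> * real r + \<beta>)))"

definition caputo :: "real \<Rightarrow> (real \<Rightarrow> real) \<Rightarrow> real \<Rightarrow> real" where
  "caputo \<nu> f t =
     (if \<nu> = 1 then deriv f t
      else (1 / Gamma (1 - \<nu>)) * integral {0..t} (\<lambda>s. deriv f s / (t - s) powr \<nu>))"

definition caputo_exists :: "real \<Rightarrow> (real \<Rightarrow> real) \<Rightarrow> real \<Rightarrow> bool" where
  "caputo_exists \<nu> f t =
     (if \<nu> = 1 then f differentiable (at t)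
      else (\<forall>s\<in>{0<..<t}. f differentiable (at s)) \<and>
           (\<lambda>s. deriv f s / (t - s) powr \<nu>) integrable_on {0..t})"

definition multi_idx :: "nat \<Rightarrow> nat \<Rightarrow> nat \<Rightarrow> (nat \<Rightarrow> nat) set" where
  "multi_idx k r j = {\<alpha>. (\<forall>i. i \<notin> {1..k} \<longrightarrow> \<alpha> i = 0) \<and>
      (\<Sum>i=1..k. \<alpha> i) = r \<and> (\<Sum>i=1..k. i * \<alpha> i) = j}"

definition multinomial :: "nat \<Rightarrow> nat \<Rightarrow> (nat \<Rightarrow> nat) \<Rightarrow> real" where
  "multinomial k r \<alpha> = fact r / (\<Prod>i=1..k. fact (\<alpha> i))"

end

theory Submission imports Defs begin

lemma gamma_ratio:
  fixes \<nu> x :: real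
  assumes nu: "0 < \<nu>" "\<nu> \<le> 1" and x: "x + \<nu> - 1 > 0"
  shows "Gamma x \<le> Gamma (x + \<nu>) * (x + \<nu> - 1) powr (-\<nu>)"
proof -
  have xpos: "x > 0" using x nu by linarith
  have c0: "(ln \<circ> Gamma) ((1 - (1-\<nu>)) *\<^sub>R (x + \<nu> - 1) + (1-\<nu>) *\<^sub>R (x+\<nu>))
     \<le> (1 - (1-\<nu>)) * (ln \<circ> Gamma) (x + \<nu> - 1) + (1-\<nu>) * (ln \<circ> Gamma) (x+\<nu>)"
    using x nu by (intro convex_onD[OF log_convex_Gamma_real]) auto
  have e: "(1 - (1-\<nu>)) *\<^sub>R (x + \<nu> - 1) + (1-\<nu>) *\<^sub>R (x+\<nu>) = x" by (simp add: algebra_simps)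
  have c: "ln (Gamma x) \<le> \<nu> * ln (Gamma (x + \<nu> - 1)) + (1-\<nu>) * ln (Gamma (x+\<nu>))"
    using c0 unfolding e by simp
  have g1: "Gamma (x + \<nu>) = (x + \<nu> - 1) * Gamma (x + \<nu> - 1)"
    proof -
    have "x + \<nu> - 1 \<notin> \<int>\<^sub>\<le>\<^sub>0" using x by (auto elim!: nonpos_Ints_cases)
    thus ?thesis using Gamma_plus1[of "x + \<nu> - 1"] by simp
  qed
  have gp1: "Gamma (x + \<nu> - 1) > 0" using x by (intro Gamma_real_pos) 
  have gp2: "Gamma (x + \<nu>) > 0" using x by (intro Gamma_real_pos) simp
  have gp3: "Gamma x > 0" using xpos by (intro Gamma_real_pos)
  have l1: "ln (Gamma (x + \<nu> - 1)) = ln (Gamma (x+\<nu>)) - ln (x + \<nu> - 1)"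
  proof -
    have "ln (Gamma (x+\<nu>)) = ln (x+\<nu>-1) + ln (Gamma (x+\<nu>-1))"
      unfolding g1 by (rule ln_mult_pos[OF x gp1])
    thus ?thesis by simp
  qed
  have "ln (Gamma x) \<le> ln (Gamma (x+\<nu>)) - \<nu> * ln (x + \<nu> - 1)"
    using c unfolding l1 by (simp add: algebra_simps)
  hence "Gamma x \<le> exp (ln (Gamma (x+\<nu>)) - \<nu> * ln (x + \<nu> - 1))"
    using gp3 by (metis exp_le_cancel_iff exp_ln)
  also have "\<dots> = Gamma (x + \<nu>) * (x + \<nu> - 1) powr (-\<nu>)"
    using gp2 x by (simp add: exp_diff powr_def exp_minus field_simps)
  finally show ?thesis .
qed

lemma Gamma_pos_nu: "0 < (\<nu>::real) \<Longrightarrow> Gamma (real m * \<nu> + 1) > 0"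
proof -
  assume "0 < \<nu>"
  hence "0 \<le> real m * \<nu>" by simp
  hence "real m * \<nu> + 1 > 0" by linarith
  thus ?thesis by (rule Gamma_real_pos)
qed

lemma summable_mlg:
  fixes \<nu> C :: real
  assumes nu: "0 < \<nu>" "\<nu> \<le> 1"
  shows "summable (\<lambda>m. \<bar>C\<bar>^m / Gamma (real m * \<nu> + 1))"
proof -
  obtain N :: nat where N: "(2*\<bar>C\<bar>+1) powr (1/\<nu>) / \<nu> < real N" using reals_Archimedean2 by blast
  show ?thesis
  proof (rule summable_ratio_test[of "1/2" N])
    fix n assume n: "N \<le> n"
    have gpos: "Gamma (real n * \<nu> + 1) > 0" by (rule Gamma_pos_nu[OF nu(1)])
    have gpos2: "Gamma (real (Suc n) * \<nu> + 1) > 0" by (rule Gamma_pos_nu[OF nu(1)])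
    have r: "Gamma (real n * \<nu> + 1) \<le> Gamma (real (Suc n) * \<nu> + 1) * (real n * \<nu> + \<nu>) powr (-\<nu>)"
      proof -
      have "real n * \<nu> \<ge> 0" using nu by simp
      hence "real n * \<nu> + 1 + \<nu> - 1 > 0" using nu by linarith
      from gamma_ratio[OF nu this] show ?thesis by (simp add: algebra_simps)
    qed
    have "(2*\<bar>C\<bar>+1) powr (1/\<nu>) \<le> real N * \<nu>" using N nu by (simp add: field_simps)
    also have "\<dots> \<le> real n * \<nu> + \<nu>"
    proof -
      have "real N \<le> real n" using n by simp
      hence "real N * \<nu> \<le> real n * \<nu>" using nu by (intro mult_right_mono) auto
      thus ?thesis using nu by linarith
    qed
    finally have "((2*\<bar>C\<bar>+1) powr (1/\<nu>)) powr \<nu> \<le> (real n * \<nu> + \<nu>) powr \<nu>"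
      using nu by (intro powr_mono2) auto
    hence le: "2*\<bar>C\<bar>+1 \<le> (real n * \<nu> + \<nu>) powr \<nu>" using nu by (simp add: powr_powr)
    have "real n * \<nu> \<ge> 0" using nu by simp
    hence "real n * \<nu> + \<nu> \<noteq> 0" using nu by linarith
    hence pp: "(real n * \<nu> + \<nu>) powr \<nu> > 0" by simp
    have cx: "\<bar>C\<bar> * (real n * \<nu> + \<nu>) powr (-\<nu>) \<le> 1/2"
      using le pp by (simp add: powr_minus field_simps)
    have "\<bar>C\<bar> * Gamma (real n * \<nu> + 1) \<le> \<bar>C\<bar> * (Gamma (real (Suc n) * \<nu> + 1) * (real n * \<nu> + \<nu>) powr (-\<nu>))"
      by (rule mult_left_mono[OF r]) simp
    also have "\<dots> = Gamma (real (Suc n) * \<nu> + 1) * (\<bar>C\<bar> * (real n * \<nu> + \<nu>) powr (-\<nu>))"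
      by (simp add: mult_ac)
    also have "\<dots> \<le> Gamma (real (Suc n) * \<nu> + 1) * (1/2)"
      by (rule mult_left_mono[OF cx]) (use gpos2 in simp)
    finally have h: "\<bar>C\<bar> * Gamma (real n * \<nu> + 1) \<le> 1/2 * Gamma (real (Suc n) * \<nu> + 1)"
      by (simp add: mult_ac)
    have "\<bar>C\<bar>^n * (\<bar>C\<bar> * Gamma (real n * \<nu> + 1)) \<le> \<bar>C\<bar>^n * (1/2 * Gamma (real (Suc n) * \<nu> + 1))"
      by (rule mult_left_mono[OF h]) simp
    thus "norm (\<bar>C\<bar> ^ Suc n / Gamma (real (Suc n) * \<nu> + 1))
          \<le> 1/2 * norm (\<bar>C\<bar> ^ n / Gamma (real n * \<nu> + 1))"
      using gpos gpos2 by (simp add: field_simps)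
  qed simp
qed



definition mlser :: "real \<Rightarrow> (nat \<Rightarrow> real) \<Rightarrow> real \<Rightarrow> real" where
  "mlser \<nu> c x = (\<Sum>m. c m * x ^ m / Gamma (real m * \<nu> + 1))"


lemma mlser_summable':
  assumes nu: "0 < \<nu>" "\<nu> \<le> 1" and B: "B \<ge> 0" "A \<ge> 0" "\<And>m. \<bar>c m\<bar> \<le> A * B^m"
  shows "summable (\<lambda>m. c m * x^m / Gamma (real m * \<nu> + 1))"
proof (rule summable_comparison_test'[OF summable_mult[OF summable_mlg[OF nu, of "B*x"], of A]])
  fix m :: nat
  have g: "Gamma (real m * \<nu> + 1) > 0" by (rule Gamma_pos_nu[OF nu(1)])
  have "\<bar>c m\<bar> * \<bar>x\<bar>^m \<le> A * B^m * \<bar>x\<bar>^m" by (rule mult_right_mono[OF B(3)]) simp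
  thus "norm (c m * x^m / Gamma (real m * \<nu> + 1)) \<le> A * (\<bar>B*x\<bar>^m / Gamma (real m * \<nu> + 1))"
    using g B(1) by (simp add: abs_mult power_abs power_mult_distrib divide_right_mono)
qed

lemma mlser_summable:
  assumes nu: "0 < \<nu>" "\<nu> \<le> 1" and B: "B \<ge> 0" "\<And>m. \<bar>c m\<bar> \<le> B^m"
  shows "summable (\<lambda>m. c m * x^m / Gamma (real m * \<nu> + 1))"
  using mlser_summable'[OF nu B(1), of 1 c] B(2) by simp

lemma mlser_deriv:
  assumes nu: "0 < \<nu>" "\<nu> \<le> 1" and B: "B \<ge> 0" "\<And>m. \<bar>c m\<bar> \<le> B^m"
  shows "(mlser \<nu> c has_field_derivative
     (\<Sum>n. diffs (\<lambda>m. c m / Gamma (real m * \<nu> + 1)) n * x^n)) (at x)"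
    and "summable (\<lambda>n. diffs (\<lambda>m. c m / Gamma (real m * \<nu> + 1)) n * x^n)"
proof -
  have e: "mlser \<nu> c = (\<lambda>x. \<Sum>m. (c m / Gamma (real m * \<nu> + 1)) * x^m)"
    unfolding mlser_def by (rule ext) simp
  have s: "summable (\<lambda>m. (c m / Gamma (real m * \<nu> + 1)) * y^m)" for y
    using mlser_summable[OF nu B, of y] by simp
  show "(mlser \<nu> c has_field_derivative
     (\<Sum>n. diffs (\<lambda>m. c m / Gamma (real m * \<nu> + 1)) n * x^n)) (at x)"
    unfolding e by (rule termdiffs_strong_converges_everywhere[OF s])
  show "summable (\<lambda>n. diffs (\<lambda>m. c m / Gamma (real m * \<nu> + 1)) n * x^n)"
    by (rule termdiff_converges_all[OF s])
qed

lemma beta_scaled: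
  fixes t a b :: real
  assumes t: "t > 0" and a: "a > 0" and b: "b > 0"
  shows "((\<lambda>s. s powr (a-1) * (t-s) powr (b-1)) has_integral t powr (a+b-1) * Beta a b) {0..t}"
proof -
  define F where "F = (\<lambda>u::real. u powr (a-1) * (1-u) powr (b-1))"
  have "(F has_integral Beta a b) (cbox 0 1)"
    unfolding F_def using has_integral_Beta_real[OF a b] by simp
  from has_integral_affinity'[OF this, of "1/t" 0] t
  have "((\<lambda>x. F ((1/t) * x)) has_integral (Beta a b * t)) {0..t}"
    by (simp add: mult.commute)
  from has_integral_mult_right[OF this, of "t powr (a-1) * t powr (b-1)"]
  have h: "((\<lambda>x. t powr (a-1) * t powr (b-1) * F ((1/t) * x)) has_integral
      (t powr (a-1) * t powr (b-1) * (Beta a b * t))) {0..t}" .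
  have v: "t powr (a-1) * t powr (b-1) * (Beta a b * t) = t powr (a+b-1) * Beta a b"
  proof -
    have "t powr (a-1) * t powr (b-1) * t = t powr ((a-1) + (b-1) + 1)"
      using t by (simp only: powr_add powr_one)
    thus ?thesis by (simp add: algebra_simps)
  qed
  have p: "t powr (a-1) * t powr (b-1) * F ((1/t) * x) = x powr (a-1) * (t-x) powr (b-1)"
    if "x \<in> {0..t}" for x
  proof -
    have "1 - x/t = (t-x)/t" using t by (simp add: field_simps)
    hence "F ((1/t) * x) = (x powr (a-1) / t powr (a-1)) * ((t-x) powr (b-1) / t powr (b-1))"
      unfolding F_def by (simp add: powr_divide)
    thus ?thesis using t by (simp add: field_simps)
  qed
  show ?thesis using has_integral_eq[OF p h] v by simp
qed



lemma Suc_le_pow2: "real (Suc n) \<le> 2 ^ n"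
proof (induction n)
  case (Suc n) thus ?case by simp
qed simp

lemma hi_open: "(f has_integral y) {a<..<b} \<longleftrightarrow> (f has_integral y) {a..b}" for f :: "real \<Rightarrow> real"
  using has_integral_open_interval[of f y a b] by simp

lemma caputo_series:
  fixes c :: "nat \<Rightarrow> real" and f :: "real \<Rightarrow> real"
  assumes nu: "0 < \<nu>" "\<nu> \<le> 1" and B: "B \<ge> 0" "\<And>m. \<bar>c m\<bar> \<le> B^m"
    and f: "\<And>t. f t = mlser \<nu> c (t powr \<nu>)"
  shows "continuous_on {0..} f"
    and "\<And>t. t > 0 \<Longrightarrow> caputo_exists \<nu> f t \<and> caputo \<nu> f t = mlser \<nu> (\<lambda>n. c (Suc n)) (t powr \<nu>)"
proof -
  define d where "d = (\<lambda>m. c m / Gamma (real m * \<nu> + 1))"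
  define D where "D = (\<lambda>x. \<Sum>n. diffs d n * x^n)"
  have fe: "f = (\<lambda>t. mlser \<nu> c (t powr \<nu>))" using f by auto
  have mderiv: "(mlser \<nu> c has_field_derivative D x) (at x)" for x
    unfolding D_def d_def by (rule mlser_deriv(1)[OF nu B])
  have Dsum: "summable (\<lambda>n. diffs d n * x^n)" for x
    unfolding d_def by (rule mlser_deriv(2)[OF nu B])
  have contm: "continuous_on UNIV (mlser \<nu> c)"
    using mderiv by (meson DERIV_isCont continuous_at_imp_continuous_on)
  have contp: "continuous_on {0..} (\<lambda>t::real. t powr \<nu>)"
    using nu by (intro continuous_on_powr' continuous_intros) auto
  show "continuous_on {0..} f"
    unfolding fe by (rule continuous_on_compose2[OF contm contp]) auto
  define u where "u = (\<lambda>n s. c (Suc n) / Gamma (real (Suc n) * \<nu>) * s powr (real (Suc n) * \<nu> - 1))"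
  have fderiv: "(f has_real_derivative D (s powr \<nu>) * (\<nu> * s powr (\<nu> - 1))) (at s)" if "s > 0" for s
    unfolding fe using DERIV_chain2[OF mderiv has_real_derivative_powr[OF that]] .
  have gS: "Gamma (real (Suc n) * \<nu>) > 0" for n using nu by (intro Gamma_real_pos) simp
  have gP: "Gamma (real (Suc n) * \<nu> + 1) = (real (Suc n) * \<nu>) * Gamma (real (Suc n) * \<nu>)" for n
  proof -
    have "real (Suc n) * \<nu> > 0" using nu by simp
    hence "real (Suc n) * \<nu> \<notin> \<int>\<^sub>\<le>\<^sub>0" using nonpos_Ints_nonpos by force
    thus ?thesis using Gamma_plus1[of "real (Suc n) * \<nu>"] by simp
  qed
  have usums: "(\<lambda>n. u n s) sums (D (s powr \<nu>) * (\<nu> * s powr (\<nu> - 1)))" if s: "s > 0" for s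
  proof -
    have "(\<lambda>n. diffs d n * (s powr \<nu>)^n * (\<nu> * s powr (\<nu> - 1))) sums (D (s powr \<nu>) * (\<nu> * s powr (\<nu> - 1)))"
      unfolding D_def by (rule sums_mult2[OF summable_sums[OF Dsum]])
    moreover have "diffs d n * (s powr \<nu>)^n * (\<nu> * s powr (\<nu> - 1)) = u n s" for n
    proof -
      have pw: "(s powr \<nu>)^n * s powr (\<nu> - 1) = s powr (real (Suc n) * \<nu> - 1)"
        using s by (simp add: powr_power powr_add[symmetric] algebra_simps)
      have "diffs d n * (s powr \<nu>)^n * (\<nu> * s powr (\<nu> - 1))
          = c (Suc n) * (real (Suc n) * \<nu>) / Gamma (real (Suc n) * \<nu> + 1) * ((s powr \<nu>)^n * s powr (\<nu> - 1))"
        unfolding diffs_def d_def by (simp add: field_simps)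
      also have "\<dots> = u n s"
      proof -
        have gen: "\<And>X a G P. (a::real) \<noteq> 0 \<Longrightarrow> X * a / (a*G) * P = X / G * P" by simp
        have "real (Suc n) * \<nu> \<noteq> 0" using nu by simp
        from gen[OF this] show ?thesis unfolding pw gP u_def .
      qed
      finally show ?thesis .
    qed
    ultimately show ?thesis by simp
  qed
  have derivf: "deriv f s = (\<Sum>n. u n s)" if "s > 0" for s
    using DERIV_imp_deriv[OF fderiv[OF that]] sums_unique[OF usums[OF that]] by simp
  have diff: "f differentiable (at s)" if "s>0" for s
    using fderiv[OF that] real_differentiable_def by blast
  fix t :: real assume t: "t > 0"
  show "caputo_exists \<nu> f t \<and> caputo \<nu> f t = mlser \<nu> (\<lambda>n. c (Suc n)) (t powr \<nu>)"
  proof (cases "\<nu> = 1")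
    case True
    have "u n t = c (Suc n) * (t powr \<nu>) ^ n / Gamma (real n * \<nu> + 1)" for n
      using t unfolding u_def True by (simp add: powr_realpow add.commute)
    hence "caputo \<nu> f t = mlser \<nu> (\<lambda>n. c (Suc n)) (t powr \<nu>)"
      unfolding caputo_def mlser_def using derivf[OF t] True by simp
    thus ?thesis using diff[OF t] True unfolding caputo_exists_def by simp
  next
    case False
    hence nu1: "\<nu> < 1" using nu by simp
    have b0: "1 - \<nu> > 0" using nu1 by simp
    have pw: "s powr (real (Suc n) * \<nu> - 1) = (s powr \<nu>)^n * s powr (\<nu> - 1)" if "s > 0" for s n
      using that by (simp add: powr_power powr_add[symmetric] algebra_simps)
    define E where "E = 2 * B * t powr \<nu> + B"
    have E0: "E \<ge> 0" using B(1) by (simp add: E_def)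
    define k where "k = (\<lambda>n. \<bar>c (Suc n)\<bar> / Gamma (real (Suc n) * \<nu>) * (t powr \<nu>)^n)"
    have k0: "k n \<ge> 0" for n unfolding k_def using gS[of n] by simp
    have ksum: "summable k"
    proof (rule summable_comparison_test'[of "\<lambda>n. \<nu> * (E^(Suc n) / Gamma (real (Suc n) * \<nu> + 1))" 0])
      have "summable (\<lambda>n. E^(Suc n) / Gamma (real (Suc n) * \<nu> + 1))"
        using summable_mlg[OF nu, of E] E0 summable_Suc_iff[of "\<lambda>n. E^n / Gamma (real n * \<nu> + 1)"] by simp
      thus "summable (\<lambda>n. \<nu> * (E^(Suc n) / Gamma (real (Suc n) * \<nu> + 1)))"
        by (rule summable_mult)
      fix n :: nat
      have "\<bar>c (Suc n)\<bar> * real (Suc n) * (t powr \<nu>)^n \<le> B^(Suc n) * 2^n * (t powr \<nu>)^n"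
        by (intro mult_mono B(2) Suc_le_pow2) (auto simp: B)
      also have "\<dots> = B * (2*B*t powr \<nu>)^n" by (simp add: power_mult_distrib)
      also have "\<dots> \<le> E * E^n" by (intro mult_mono power_mono) (auto simp: E_def B)
      finally have le: "\<bar>c (Suc n)\<bar> * real (Suc n) * (t powr \<nu>)^n \<le> E^(Suc n)" by simp
      have kn: "k n = \<nu> * (\<bar>c (Suc n)\<bar> * real (Suc n) * (t powr \<nu>)^n) / Gamma (real (Suc n) * \<nu> + 1)"
      proof -
        have gen: "\<And>X r G P. (r::real) \<noteq> 0 \<Longrightarrow> X / G * P = \<nu> * (X * r * P) / ((r * \<nu>) * G)"
          using nu by (case_tac "G = 0") (simp_all add: field_simps)
        show ?thesis unfolding k_def gP by (rule gen) simp
      qed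
      have gp1: "Gamma (real (Suc n) * \<nu> + 1) > 0" by (rule Gamma_pos_nu[OF nu(1)])
      show "norm (k n) \<le> \<nu> * (E^(Suc n) / Gamma (real (Suc n) * \<nu> + 1))"
        using k0[of n] unfolding kn using le nu gp1
        by (simp add: divide_right_mono mult_left_mono)
    qed
    define K where "K = suminf k"
    have K0: "K \<ge> 0" unfolding K_def using k0 ksum by (simp add: suminf_nonneg)
    define h where "h = (\<lambda>s. K * (s powr (\<nu> - 1) * (t - s) powr ((1-\<nu>) - 1)))"
    have "h integrable_on {0..t}"
      using has_integral_mult_right[OF beta_scaled[OF t nu(1) b0], of K]
      unfolding h_def integrable_on_def by blast
    hence hint: "h integrable_on {0<..<t}" by (simp add: integrable_on_open_interval_real)
    define F where "F = (\<lambda>N s. \<Sum>n<N. u n s * (t - s) powr ((1-\<nu>) - 1))"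
    define y where "y = (\<lambda>N. \<Sum>n<N. Gamma (1-\<nu>) * (c (Suc n) * (t powr \<nu>)^n / Gamma (real n * \<nu> + 1)))"
    have Fint: "(F N has_integral y N) {0<..<t}" for N
      unfolding F_def y_def
    proof (rule has_integral_sum)
      fix n assume "n \<in> {..<N}"
      define a where "a = real (Suc n) * \<nu>"
      have a0: "a > 0" using nu by (simp add: a_def)
      have "((\<lambda>s. c (Suc n) / Gamma a * (s powr (a - 1) * (t - s) powr ((1-\<nu>) - 1))) has_integral
            c (Suc n) / Gamma a * (t powr (a + (1-\<nu>) - 1) * Beta a (1-\<nu>))) {0..t}"
        by (rule has_integral_mult_right[OF beta_scaled[OF t a0 b0]])
      moreover have "c (Suc n) / Gamma a * (t powr (a + (1-\<nu>) - 1) * Beta a (1-\<nu>))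
          = Gamma (1-\<nu>) * (c (Suc n) * (t powr \<nu>)^n / Gamma (real n * \<nu> + 1))"
      proof -
        have ar: "a + (1-\<nu>) = real n * \<nu> + 1" unfolding a_def by (simp add: algebra_simps)
        have ar2: "a + (1-\<nu>) - 1 = real n * \<nu>" using ar by simp
        have tp: "t powr (real n * \<nu>) = (t powr \<nu>)^n" using t by (simp add: powr_power)
        have tp2: "t powr (\<nu> * real n) = (t powr \<nu>)^n" using tp by (simp add: mult.commute)
        have "Gamma a > 0" using a0 by (rule Gamma_real_pos)
        thus ?thesis unfolding ar2 Beta_def ar tp by (simp add: field_simps tp2)
      qed
      ultimately have "((\<lambda>s. u n s * (t - s) powr ((1-\<nu>) - 1)) has_integral
            Gamma (1-\<nu>) * (c (Suc n) * (t powr \<nu>)^n / Gamma (real n * \<nu> + 1))) {0..t}"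
        unfolding u_def a_def by (simp add: mult.assoc)
      thus "((\<lambda>s. u n s * (t - s) powr ((1-\<nu>) - 1)) has_integral
            Gamma (1-\<nu>) * (c (Suc n) * (t powr \<nu>)^n / Gamma (real n * \<nu> + 1))) {0<..<t}"
        by (rule hi_open[THEN iffD2])
    qed simp
    have Fbound: "\<forall>s\<in>{0<..<t}. norm (F N s) \<le> h s" for N
    proof
      fix s assume s: "s \<in> {0<..<t}"
      have tsp: "(t - s) powr ((1-\<nu>) - 1) > 0" using s by simp
      have sp: "s powr (\<nu> - 1) > 0" using s by simp
      have "norm (F N s) \<le> (\<Sum>n<N. \<bar>u n s * (t - s) powr ((1-\<nu>) - 1)\<bar>)"
        unfolding F_def real_norm_def by (rule sum_abs)
      also have "\<dots> = (\<Sum>n<N. \<bar>u n s\<bar> * (t - s) powr ((1-\<nu>) - 1))"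
        using tsp by (simp add: abs_mult)
      also have "\<dots> \<le> (\<Sum>n<N. k n * s powr (\<nu> - 1) * (t - s) powr ((1-\<nu>) - 1))"
      proof (rule sum_mono)
        fix n
        have "(s powr \<nu>)^n \<le> (t powr \<nu>)^n"
          using s nu by (intro power_mono powr_mono2) auto
        hence le1: "(s powr \<nu>)^n * s powr (\<nu> - 1) \<le> (t powr \<nu>)^n * s powr (\<nu> - 1)"
          using sp by (simp add: mult_right_mono)
        have s0: "s > 0" using s by simp
        have "\<bar>u n s\<bar> = \<bar>c (Suc n)\<bar> / Gamma (real (Suc n) * \<nu>) * ((s powr \<nu>)^n * s powr (\<nu> - 1))"
          unfolding u_def pw[OF s0] using gS[of n] by (simp add: abs_mult)
        also have "\<dots> \<le> \<bar>c (Suc n)\<bar> / Gamma (real (Suc n) * \<nu>) * ((t powr \<nu>)^n * s powr (\<nu> - 1))"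
          using gS[of n] le1 by (intro mult_left_mono) auto
        also have "\<dots> = k n * s powr (\<nu> - 1)" unfolding k_def by (simp add: mult.assoc)
        finally have "\<bar>u n s\<bar> \<le> k n * s powr (\<nu> - 1)" .
        thus "\<bar>u n s\<bar> * (t - s) powr ((1-\<nu>) - 1) \<le> k n * s powr (\<nu> - 1) * (t - s) powr ((1-\<nu>) - 1)"
          using tsp by (simp add: mult_right_mono)
      qed
      also have "\<dots> = (\<Sum>n<N. k n) * (s powr (\<nu> - 1) * (t - s) powr ((1-\<nu>) - 1))"
        by (simp add: sum_distrib_right mult.assoc)
      also have "\<dots> \<le> h s" unfolding h_def K_def
        using sum_le_suminf[OF ksum, of "{..<N}"] k0 sp tsp
        by (intro mult_right_mono) auto
      finally show "norm (F N s) \<le> h s" .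
    qed
    define g where "g = (\<lambda>s. deriv f s / (t - s) powr \<nu>)"
    have Fconv: "\<forall>s\<in>{0<..<t}. (\<lambda>N. F N s) \<longlonglongrightarrow> g s"
    proof
      fix s assume s: "s \<in> {0<..<t}"
      have "(\<lambda>n. u n s * (t - s) powr ((1-\<nu>) - 1)) sums ((\<Sum>n. u n s) * (t - s) powr ((1-\<nu>) - 1))"
        using s by (intro sums_mult2 summable_sums sums_summable[OF usums]) auto
      moreover have "(\<Sum>n. u n s) * (t - s) powr ((1-\<nu>) - 1) = g s"
        unfolding g_def using derivf[of s] s by (simp add: powr_minus_divide)
      ultimately show "(\<lambda>N. F N s) \<longlonglongrightarrow> g s" unfolding F_def sums_def by simp
    qed
    define M where "M = mlser \<nu> (\<lambda>n. c (Suc n)) (t powr \<nu>)"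
    have yconv: "y \<longlonglongrightarrow> Gamma (1-\<nu>) * M"
    proof -
      have "summable (\<lambda>n. c (Suc n) * (t powr \<nu>)^n / Gamma (real n * \<nu> + 1))"
        using B(2)[of "Suc _"] by (intro mlser_summable'[OF nu B(1), of B]) (auto simp: B(1))
      hence "(\<lambda>n. Gamma (1-\<nu>) * (c (Suc n) * (t powr \<nu>)^n / Gamma (real n * \<nu> + 1))) sums (Gamma (1-\<nu>) * M)"
        unfolding M_def mlser_def by (intro sums_mult summable_sums)
      thus ?thesis unfolding y_def sums_def .
    qed
    have gint: "(g has_integral Gamma (1-\<nu>) * M) {0<..<t}"
      by (rule has_integral_dominated_convergence[OF Fint hint Fbound Fconv yconv])
    hence gint2: "(g has_integral Gamma (1-\<nu>) * M) {0..t}"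
      by (rule hi_open[THEN iffD1])
    have G1: "Gamma (1-\<nu>) > 0" using b0 by (rule Gamma_real_pos)
    have "caputo \<nu> f t = M"
      unfolding caputo_def using False integral_unique[OF gint2] G1 unfolding g_def by simp
    moreover have "caputo_exists \<nu> f t"
      unfolding caputo_exists_def using False diff gint2 unfolding g_def
      by (auto simp: has_integral_integrable)
    ultimately show ?thesis unfolding M_def by simp
  qed
qed



definition wt :: "nat \<Rightarrow> (nat \<Rightarrow> real) \<Rightarrow> nat \<Rightarrow> nat \<Rightarrow> real" where
  "wt k lam j r = (\<Sum>\<alpha>\<in>multi_idx k r j. multinomial k r \<alpha> * (\<Prod>i=1..k. lam i ^ \<alpha> i))"

lemma multi_idx_finite: "finite (multi_idx k r j)"
proof (rule finite_subset)
  show "multi_idx k r j \<subseteq> {f. \<forall>x. (x \<in> {1..k} \<longrightarrow> f x \<in> {0..r}) \<and> (x \<notin> {1..k} \<longrightarrow> f x = 0)}"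
  proof (safe)
    fix \<alpha> x assume a: "\<alpha> \<in> multi_idx k r j" and x: "x \<in> {1..k}"
    have "\<alpha> x \<le> (\<Sum>i=1..k. \<alpha> i)" using x by (intro member_le_sum) auto
    thus "\<alpha> x \<in> {0..r}" using a unfolding multi_idx_def by auto
  next
    fix \<alpha> x assume "\<alpha> \<in> multi_idx k r j" "x \<notin> {1..k}"
    thus "\<alpha> x = 0" unfolding multi_idx_def by auto
  qed
qed (rule finite_set_of_finite_funs; simp)

lemma multi_idx_empty: "r > j \<Longrightarrow> multi_idx k r j = {}"
proof (rule ccontr)
  assume "r > j" "multi_idx k r j \<noteq> {}"
  then obtain \<alpha> where a: "\<alpha> \<in> multi_idx k r j" by auto
  have "(\<Sum>i=1..k. \<alpha> i) \<le> (\<Sum>i=1..k. i * \<alpha> i)" by (intro sum_mono) auto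
  thus False using a \<open>r > j\<close> unfolding multi_idx_def by auto
qed

lemma wt_zero: "r > j \<Longrightarrow> wt k lam j r = 0"
  unfolding wt_def using multi_idx_empty by simp

lemma wt_0: "wt k lam j 0 = (if j = 0 then 1 else 0)"
proof -
  have "multi_idx k 0 j = (if j = 0 then {\<lambda>_. 0} else {})"
  proof (cases "j = 0")
    case True
    have "multi_idx k 0 0 = {\<lambda>_. 0}"
    proof safe
      fix \<alpha> assume a: "\<alpha> \<in> multi_idx k 0 0"
      show "\<alpha> = (\<lambda>_. 0)"
      proof
        fix x show "\<alpha> x = 0"
          using a unfolding multi_idx_def by (cases "x \<in> {1..k}") auto
      qed
    qed (auto simp: multi_idx_def)
    thus ?thesis using True by simp
  next
    case False
    have "multi_idx k 0 j = {}"
    proof safe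
      fix \<alpha> assume a: "\<alpha> \<in> multi_idx k 0 j"
      hence "\<forall>i\<in>{1..k}. \<alpha> i = 0" unfolding multi_idx_def by simp
      hence "(\<Sum>i=1..k. i * \<alpha> i) = 0" by simp
      thus "\<alpha> \<in> {}" using a False unfolding multi_idx_def by simp
    qed
    thus ?thesis using False by simp
  qed
  thus ?thesis unfolding wt_def multinomial_def by simp
qed

lemma sum_upd: "finite S \<Longrightarrow> i \<in> S \<Longrightarrow> sum (f(i:=v)) S + f i = sum f S + (v :: 'a :: comm_monoid_add)"
  by (simp add: sum.remove add_ac)

lemma prod_upd: "finite S \<Longrightarrow> i \<in> S \<Longrightarrow> prod (f(i:=v)) S * f i = prod f S * (v :: 'a :: comm_monoid_mult)"
  by (simp add: prod.remove ac_simps)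



definition up :: "nat \<Rightarrow> (nat \<Rightarrow> nat) \<Rightarrow> nat \<Rightarrow> nat" where "up i \<beta> = \<beta>(i := Suc (\<beta> i))"
definition down :: "nat \<Rightarrow> (nat \<Rightarrow> nat) \<Rightarrow> nat \<Rightarrow> nat" where "down i \<alpha> = \<alpha>(i := \<alpha> i - 1)"

lemma T_split:
  fixes lam :: "nat \<Rightarrow> real"
  assumes lam: "\<forall>i\<in>{1..k}. lam i > 0" and i: "i \<in> {1..k}" and ai: "\<alpha> i \<noteq> 0"
  shows "lam i * (multinomial k r (down i \<alpha>) * (\<Prod>l=1..k. lam l ^ down i \<alpha> l))
       = real (\<alpha> i) * (fact r / (\<Prod>l=1..k. fact (\<alpha> l)) * (\<Prod>l=1..k. lam l ^ \<alpha> l))"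
proof -
  obtain a where a: "\<alpha> i = Suc a" using ai by (cases "\<alpha> i") auto
  define P' where "P' = (\<Prod>l\<in>{1..k}-{i}. (fact (\<alpha> l) :: real))"
  define Q' where "Q' = (\<Prod>l\<in>{1..k}-{i}. lam l ^ \<alpha> l)"
  have c1: "(\<Prod>l\<in>{1..k}-{i}. (fact (down i \<alpha> l) :: real)) = P'"
    unfolding P'_def down_def by (intro prod.cong) auto
  have c3: "(\<Prod>l\<in>{1..k}-{i}. lam l ^ down i \<alpha> l) = Q'"
    unfolding Q'_def down_def by (intro prod.cong) auto
  have d1: "(\<Prod>l=1..k. (fact (down i \<alpha> l) :: real)) = fact a * P'"
    using i a c1 by (simp add: prod.remove[of _ i] down_def)
  have d2: "(\<Prod>l=1..k. (fact (\<alpha> l) :: real)) = real (Suc a) * (fact a * P')"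
    unfolding P'_def using i a by (simp add: prod.remove[of _ i])
  have d3: "(\<Prod>l=1..k. lam l ^ down i \<alpha> l) = lam i ^ a * Q'"
    using i a c3 by (simp add: prod.remove[of _ i] down_def)
  have d4: "(\<Prod>l=1..k. lam l ^ \<alpha> l) = lam i * (lam i ^ a * Q')"
    unfolding Q'_def using i a by (simp add: prod.remove[of _ i])
  have P'0: "P' > 0" unfolding P'_def by (intro prod_pos) auto
  have gen: "\<And>s X fr Y L. (s::real) \<noteq> 0 \<Longrightarrow> X \<noteq> 0 \<Longrightarrow> L * (fr / X * Y) = s * (fr / (s * X) * (L * Y))"
    by (simp add: field_simps)
  show ?thesis unfolding multinomial_def d1 d2 d3 d4 a using P'0
    by (intro gen) auto
qed

lemma W1:
  fixes lam :: "nat \<Rightarrow> real"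
  assumes lam: "\<forall>i\<in>{1..k}. lam i > 0" and a: "\<alpha> \<in> multi_idx k (Suc r) j"
  shows "multinomial k (Suc r) \<alpha> * (\<Prod>l=1..k. lam l ^ \<alpha> l) =
    (\<Sum>i\<in>{1..k}. if \<alpha> i = 0 then 0 else lam i * (multinomial k r (down i \<alpha>) * (\<Prod>l=1..k. lam l ^ down i \<alpha> l)))"
proof -
  have "(\<Sum>i\<in>{1..k}. if \<alpha> i = 0 then 0 else lam i * (multinomial k r (down i \<alpha>) * (\<Prod>l=1..k. lam l ^ down i \<alpha> l)))
     = (\<Sum>i\<in>{1..k}. real (\<alpha> i) * (fact r / (\<Prod>l=1..k. fact (\<alpha> l)) * (\<Prod>l=1..k. lam l ^ \<alpha> l)))"
  proof (intro sum.cong refl)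
    fix i assume i: "i \<in> {1..k}"
    show "(if \<alpha> i = 0 then 0 else lam i * (multinomial k r (down i \<alpha>) * (\<Prod>l=1..k. lam l ^ down i \<alpha> l)))
      = real (\<alpha> i) * (fact r / (\<Prod>l=1..k. fact (\<alpha> l)) * (\<Prod>l=1..k. lam l ^ \<alpha> l))"
      using T_split[OF lam i, of \<alpha> r] by (cases "\<alpha> i = 0") simp_all
  qed
  also have "\<dots> = real (\<Sum>i\<in>{1..k}. \<alpha> i) * (fact r / (\<Prod>l=1..k. fact (\<alpha> l)) * (\<Prod>l=1..k. lam l ^ \<alpha> l))"
    by (simp only: of_nat_sum sum_distrib_right)
  also have "(\<Sum>i\<in>{1..k}. \<alpha> i) = Suc r" using a unfolding multi_idx_def by simp
  finally show ?thesis unfolding multinomial_def by (simp add: field_simps)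
qed

lemma W3:
  fixes lam :: "nat \<Rightarrow> real"
  assumes i: "i \<in> {1..k}"
  shows "(\<Sum>\<alpha>\<in>{\<alpha>\<in>multi_idx k (Suc r) j. \<alpha> i \<noteq> 0}. multinomial k r (down i \<alpha>) * (\<Prod>l=1..k. lam l ^ down i \<alpha> l))
     = (if i \<le> j then wt k lam (j - i) r else 0)"
proof (cases "i \<le> j")
  case False
  have z: "\<alpha> i = 0" if a1: "\<alpha> \<in> multi_idx k (Suc r) j" for \<alpha>
  proof (rule ccontr)
    assume a2: "\<alpha> i \<noteq> 0"
    have "i * \<alpha> i \<le> (\<Sum>l=1..k. l * \<alpha> l)" using i by (intro member_le_sum) auto
    moreover have "i \<le> i * \<alpha> i" using a2 by simp
    moreover have "(\<Sum>l=1..k. l * \<alpha> l) = j" using a1 unfolding multi_idx_def by simp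
    ultimately have "i \<le> j" by linarith
    thus False using False by simp
  qed
  hence E: "{\<alpha>\<in>multi_idx k (Suc r) j. \<alpha> i \<noteq> 0} = {}" by auto
  show ?thesis unfolding E using False by (simp only: sum.empty if_False)
next
  case True
  have fin: "finite {1..k::nat}" by simp
  have "(\<Sum>\<alpha>\<in>{\<alpha>\<in>multi_idx k (Suc r) j. \<alpha> i \<noteq> 0}. multinomial k r (down i \<alpha>) * (\<Prod>l=1..k. lam l ^ down i \<alpha> l))
     = (\<Sum>\<beta>\<in>multi_idx k r (j - i). multinomial k r \<beta> * (\<Prod>l=1..k. lam l ^ \<beta> l))"
  proof (rule sum.reindex_bij_witness[where i = "up i" and j = "down i"])
    fix \<alpha> assume a: "\<alpha> \<in> {\<alpha>\<in>multi_idx k (Suc r) j. \<alpha> i \<noteq> 0}"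
    show "up i (down i \<alpha>) = \<alpha>" using a by (auto simp: up_def down_def)
    have s1: "sum (down i \<alpha>) {1..k} + \<alpha> i = sum \<alpha> {1..k} + (\<alpha> i - 1)"
      unfolding down_def using sum_upd[OF fin i, of \<alpha>] by simp
    have e2: "(\<lambda>l. l * down i \<alpha> l) = (\<lambda>l. l * \<alpha> l)(i := i * (\<alpha> i - 1))"
      by (auto simp: down_def)
    have s2: "(\<Sum>l=1..k. l * down i \<alpha> l) + i * \<alpha> i = (\<Sum>l=1..k. l * \<alpha> l) + i * (\<alpha> i - 1)"
      unfolding e2 using sum_upd[OF fin i, of "\<lambda>l. l * \<alpha> l"] by simp
    show "down i \<alpha> \<in> multi_idx k r (j - i)"
      using a s1 s2 i unfolding multi_idx_def
      by (auto simp: down_def diff_mult_distrib2)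
  next
    fix \<beta> assume b: "\<beta> \<in> multi_idx k r (j - i)"
    show "down i (up i \<beta>) = \<beta>" by (auto simp: up_def down_def)
    have s1: "sum (up i \<beta>) {1..k} + \<beta> i = sum \<beta> {1..k} + Suc (\<beta> i)"
      unfolding up_def using sum_upd[OF fin i, of \<beta>] by simp
    have e2: "(\<lambda>l. l * up i \<beta> l) = (\<lambda>l. l * \<beta> l)(i := i * Suc (\<beta> i))"
      by (auto simp: up_def)
    have s2: "(\<Sum>l=1..k. l * up i \<beta> l) + i * \<beta> i = (\<Sum>l=1..k. l * \<beta> l) + i * Suc (\<beta> i)"
      unfolding e2 using sum_upd[OF fin i, of "\<lambda>l. l * \<beta> l"] by simp
    show "up i \<beta> \<in> {\<alpha>\<in>multi_idx k (Suc r) j. \<alpha> i \<noteq> 0}"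
      using b s1 s2 i True unfolding multi_idx_def
      by (auto simp: up_def)
  qed auto
  thus ?thesis unfolding wt_def using True by simp
qed

lemma W:
  fixes lam :: "nat \<Rightarrow> real"
  assumes lam: "\<forall>i\<in>{1..k}. lam i > 0"
  shows "wt k lam j (Suc r) = (\<Sum>i\<in>{1..k}. if i \<le> j then lam i * wt k lam (j - i) r else 0)"
proof -
  have "wt k lam j (Suc r) = (\<Sum>\<alpha>\<in>multi_idx k (Suc r) j. \<Sum>i\<in>{1..k}.
      if \<alpha> i = 0 then 0 else lam i * (multinomial k r (down i \<alpha>) * (\<Prod>l=1..k. lam l ^ down i \<alpha> l)))"
    unfolding wt_def by (intro sum.cong refl W1[OF lam])
  also have "\<dots> = (\<Sum>i\<in>{1..k}. \<Sum>\<alpha>\<in>multi_idx k (Suc r) j.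
      if \<alpha> i = 0 then 0 else lam i * (multinomial k r (down i \<alpha>) * (\<Prod>l=1..k. lam l ^ down i \<alpha> l)))"
    by (rule sum.swap)
  also have "\<dots> = (\<Sum>i\<in>{1..k}. if i \<le> j then lam i * wt k lam (j - i) r else 0)"
  proof (intro sum.cong refl)
    fix i assume i: "i \<in> {1..k}"
    define X where "X = (\<lambda>\<alpha>. multinomial k r (down i \<alpha>) * (\<Prod>l=1..k. lam l ^ down i \<alpha> l))"
    have "(\<Sum>\<alpha>\<in>multi_idx k (Suc r) j. if \<alpha> i = 0 then 0 else lam i * X \<alpha>)
        = (\<Sum>\<alpha>\<in>{\<alpha>\<in>multi_idx k (Suc r) j. \<alpha> i \<noteq> 0}. lam i * X \<alpha>)"
      by (subst sum.inter_filter[OF multi_idx_finite]) (rule sum.cong; auto)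
    also have "\<dots> = lam i * (\<Sum>\<alpha>\<in>{\<alpha>\<in>multi_idx k (Suc r) j. \<alpha> i \<noteq> 0}. X \<alpha>)"
      by (rule sum_distrib_left[symmetric])
    also have "\<dots> = (if i \<le> j then lam i * wt k lam (j - i) r else 0)"
      unfolding X_def W3[OF i] by simp
    finally show "(\<Sum>\<alpha>\<in>multi_idx k (Suc r) j. if \<alpha> i = 0 then 0 else lam i * (multinomial k r (down i \<alpha>) * (\<Prod>l=1..k. lam l ^ down i \<alpha> l)))
      = (if i \<le> j then lam i * wt k lam (j - i) r else 0)" unfolding X_def .
  qed
  finally show ?thesis .
qed



definition ee :: "real \<Rightarrow> nat \<Rightarrow> nat \<Rightarrow> real" where
  "ee L r m = real (m choose r) * (-L)^(m - r)"

definition AA :: "nat \<Rightarrow> (nat \<Rightarrow> real) \<Rightarrow> real \<Rightarrow> nat \<Rightarrow> nat \<Rightarrow> real" where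
  "AA k lam L j m = (\<Sum>r\<le>j. wt k lam j r * ee L r m)"

lemma ee_Suc: "ee L r (Suc m) = (if r = 0 then 0 else ee L (r-1) m) - L * ee L r m"
proof (cases r)
  case 0 thus ?thesis by (simp add: ee_def)
next
  case (Suc r')
  have "real (m choose Suc r') * (-L)^(m - r') = - L * (real (m choose Suc r') * (-L)^(m - Suc r'))"
  proof (cases "Suc r' \<le> m")
    case True
    hence "m - r' = Suc (m - Suc r')" by simp
    thus ?thesis by simp
  next
    case False
    hence "m choose Suc r' = 0" by simp
    thus ?thesis by (simp del: binomial_eq_0_iff)
  qed
  thus ?thesis unfolding ee_def Suc by (simp add: algebra_simps)
qed

lemma AA_ext:
  assumes "j \<le> N" shows "AA k lam L j m = (\<Sum>r\<le>N. wt k lam j r * ee L r m)"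
  unfolding AA_def using assms
  by (intro sum.mono_neutral_left) (auto simp: wt_zero)

lemma AA_0: "AA k lam L j 0 = (if j = 0 then 1 else 0)"
proof -
  have "AA k lam L j 0 = (\<Sum>r\<le>j. if r = 0 then wt k lam j 0 else 0)"
    unfolding AA_def ee_def by (intro sum.cong refl) auto
  thus ?thesis by (simp add: wt_0)
qed

lemma AA_Suc:
  fixes lam :: "nat \<Rightarrow> real"
  assumes lam: "\<forall>i\<in>{1..k}. lam i > 0"
  shows "AA k lam L j (Suc m) = (\<Sum>i\<in>{1..k}. if i \<le> j then lam i * AA k lam L (j-i) m else 0) - L * AA k lam L j m"
proof -
  have "AA k lam L j (Suc m) = (\<Sum>r\<le>j. wt k lam j r * (if r = 0 then 0 else ee L (r-1) m)) - L * AA k lam L j m"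
    unfolding AA_def ee_Suc by (simp add: algebra_simps sum_subtractf sum_distrib_left)
  also have "(\<Sum>r\<le>j. wt k lam j r * (if r = 0 then 0 else ee L (r-1) m))
      = (\<Sum>i\<in>{1..k}. if i \<le> j then lam i * AA k lam L (j-i) m else 0)"
  proof (cases j)
    case 0 thus ?thesis by simp
  next
    case (Suc j')
    have "(\<Sum>r\<le>j. wt k lam j r * (if r = 0 then 0 else ee L (r-1) m))
        = (\<Sum>r\<le>j'. wt k lam j (Suc r) * ee L r m)"
      unfolding Suc by (subst sum.atMost_Suc_shift) simp
    also have "\<dots> = (\<Sum>r\<le>j'. \<Sum>i\<in>{1..k}. if i \<le> j then lam i * (wt k lam (j - i) r * ee L r m) else 0)"
      unfolding W[OF lam] by (intro sum.cong refl) (auto simp: sum_distrib_right intro!: sum.cong)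
    also have "\<dots> = (\<Sum>i\<in>{1..k}. \<Sum>r\<le>j'. if i \<le> j then lam i * (wt k lam (j - i) r * ee L r m) else 0)"
      by (rule sum.swap)
    also have "\<dots> = (\<Sum>i\<in>{1..k}. if i \<le> j then lam i * AA k lam L (j-i) m else 0)"
    proof (intro sum.cong refl)
      fix i assume i: "i \<in> {1..k}"
      show "(\<Sum>r\<le>j'. if i \<le> j then lam i * (wt k lam (j - i) r * ee L r m) else 0)
          = (if i \<le> j then lam i * AA k lam L (j-i) m else 0)"
      proof (cases "i \<le> j")
        case True
        have "j - i \<le> j'" using i Suc by auto
        thus ?thesis using True by (simp add: AA_ext[of _ j'] sum_distrib_left)
      qed simp
    qed
    finally show ?thesis .
  qed
  finally show ?thesis .
qed

lemma AA_bound: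
  fixes lam :: "nat \<Rightarrow> real"
  assumes lam: "\<forall>i\<in>{1..k}. lam i > 0" and L: "L = (\<Sum>i=1..k. lam i)"
  shows "\<bar>AA k lam L j m\<bar> \<le> (2*L)^m"
proof (induction m arbitrary: j)
  case 0 thus ?case by (simp add: AA_0)
next
  case (Suc m)
  have L0: "L \<ge> 0" unfolding L using lam by (intro sum_nonneg) (fastforce intro: less_imp_le)
  have "\<bar>AA k lam L j (Suc m)\<bar> \<le> \<bar>\<Sum>i\<in>{1..k}. if i \<le> j then lam i * AA k lam L (j-i) m else 0\<bar> + \<bar>L * AA k lam L j m\<bar>"
    unfolding AA_Suc[OF lam] by (rule abs_triangle_ineq4)
  also have "\<bar>\<Sum>i\<in>{1..k}. if i \<le> j then lam i * AA k lam L (j-i) m else 0\<bar> \<le> (\<Sum>i\<in>{1..k}. lam i * (2*L)^m)"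
  proof (rule order_trans[OF sum_abs], rule sum_mono)
    fix i assume i: "i \<in> {1..k}"
    show "\<bar>if i \<le> j then lam i * AA k lam L (j-i) m else 0\<bar> \<le> lam i * (2*L)^m"
    proof -
      have li: "lam i > 0" using lam i by simp
      show ?thesis
      proof (cases "i \<le> j")
        case True
        thus ?thesis using li Suc.IH[of "j-i"] by (simp add: abs_mult mult_left_mono)
      qed (use li L0 in simp)
    qed
  qed
  also have "(\<Sum>i\<in>{1..k}. lam i * (2*L)^m) = L * (2*L)^m" unfolding L by (simp add: sum_distrib_right)
  also have "\<bar>L * AA k lam L j m\<bar> \<le> L * (2*L)^m"
    using Suc.IH[of j] L0 by (simp add: abs_mult mult_left_mono)
  finally show ?case by (simp add: mult_ac)
qed



lemma PB: "pochhammer (real r + 1) n / fact n = real ((n+r) choose r)"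
proof -
  have "real (n + r) gchoose n = pochhammer (real (n+r) - real n + 1) n / fact n"
    by (rule gbinomial_pochhammer')
  moreover have "real (n+r) - real n + 1 = real r + 1" by simp
  moreover have "real ((n+r) choose n) = real (n + r) gchoose n" by (rule binomial_gbinomial)
  moreover have "(n+r) choose r = (n+r) choose n" using binomial_symmetric[of r "n+r"] by simp
  ultimately show ?thesis by simp
qed

lemma ee_bound: "\<bar>ee L r m\<bar> \<le> 1 * (2 * max 1 \<bar>L\<bar>)^m"
proof -
  have "\<bar>ee L r m\<bar> = real (m choose r) * \<bar>L\<bar>^(m-r)" by (simp add: ee_def abs_mult power_abs)
  also have "\<dots> \<le> 2^m * (max 1 \<bar>L\<bar>)^m"
  proof (rule mult_mono)
    have "real (m choose r) \<le> real (2^m)" using binomial_le_pow2[of m r] by (simp only: of_nat_le_iff)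
    thus "real (m choose r) \<le> 2^m" by simp
    have "\<bar>L\<bar>^(m-r) \<le> (max 1 \<bar>L\<bar>)^(m-r)" by (intro power_mono) auto
    also have "\<dots> \<le> (max 1 \<bar>L\<bar>)^m" by (intro power_increasing) auto
    finally show "\<bar>L\<bar>^(m-r) \<le> (max 1 \<bar>L\<bar>)^m" .
  qed auto
  finally show ?thesis by (simp add: power_mult_distrib)
qed

lemma mittag_sums:
  assumes nu: "0 < \<nu>" "\<nu> \<le> 1"
  shows "(\<lambda>m. ee L r m * x^m / Gamma (real m * \<nu> + 1)) sums
           (x^r * mittag_leffler3 (real r + 1) \<nu> (real r * \<nu> + 1) (- L * x))"
proof -
  define T where "T = (\<lambda>m. ee L r m * x^m / Gamma (real m * \<nu> + 1))"
  define mlterm where "mlterm = (\<lambda>n. pochhammer (real r + 1) n * (- L * x)^n / (fact n * Gamma (\<nu> * real n + (real r * \<nu> + 1))))"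
  have Tsum: "summable T" unfolding T_def
    by (rule mlser_summable'[OF nu _ _ ee_bound]) auto
  have T0: "T m = 0" if "m < r" for m using that unfolding T_def ee_def by simp
  have shift: "(\<lambda>n. T (n + r)) sums suminf T"
    using sums_zero_iff_shift[of r T] T0 summable_sums[OF Tsum] by simp
  have Tn: "T (n + r) = x^r * mlterm n" for n
  proof -
    have ga: "\<nu> * real n + (real r * \<nu> + 1) = real (n + r) * \<nu> + 1" by (simp add: algebra_simps)
    have "T (n + r) = real ((n+r) choose r) * (-L)^n * x^(n+r) / Gamma (real (n + r) * \<nu> + 1)"
      unfolding T_def ee_def by simp
    also have "\<dots> = pochhammer (real r + 1) n / fact n * (-L)^n * x^(n+r) / Gamma (real (n + r) * \<nu> + 1)"
      by (simp only: PB)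
    also have "\<dots> = x^r * mlterm n" unfolding mlterm_def ga power_mult_distrib power_add
      by (simp add: field_simps)
    finally show ?thesis .
  qed
  have mleq: "mittag_leffler3 (real r + 1) \<nu> (real r * \<nu> + 1) (- L * x) = suminf mlterm"
    unfolding mittag_leffler3_def mlterm_def ..
  show ?thesis
  proof (cases "x^r = 0")
    case True
    hence x0: "x = 0" "r > 0" by (auto simp: power_eq_0_iff)
    have "T m = 0" for m
    proof (cases "m < r")
      case False thus ?thesis using x0 unfolding T_def by simp
    qed (rule T0)
    hence "T = (\<lambda>_. 0)" by auto
    hence "T sums 0" by simp
    thus ?thesis using True unfolding T_def by (simp only: mult_zero_left)
  next
    case False
    have "(\<lambda>n. T (n + r) / x^r) sums (suminf T / x^r)" by (rule sums_divide[OF shift])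
    moreover have "(\<lambda>n. T (n + r) / x^r) = mlterm" using Tn False by (auto simp del: power_eq_0_iff)
    ultimately have "mlterm sums (suminf T / x^r)" by simp
    hence "suminf mlterm = suminf T / x^r" by (rule sums_unique[symmetric])
    hence "x^r * mittag_leffler3 (real r + 1) \<nu> (real r * \<nu> + 1) (- L * x) = suminf T"
      unfolding mleq using False by simp
    thus ?thesis using summable_sums[OF Tsum] unfolding T_def by simp
  qed
qed

lemma p_series:
  assumes nu: "0 < \<nu>" "\<nu> \<le> 1"
  shows "(\<lambda>m. AA k lam L j m * x^m / Gamma (real m * \<nu> + 1)) sums
     (\<Sum>r=0..j. \<Sum>\<alpha>\<in>multi_idx k r j. multinomial k r \<alpha> * (\<Prod>i=1..k. lam i ^ \<alpha> i) * x ^ r *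
         mittag_leffler3 (real r + 1) \<nu> (real r * \<nu> + 1) (- L * x))"
proof -
  have "(\<lambda>m. \<Sum>r\<le>j. wt k lam j r * (ee L r m * x^m / Gamma (real m * \<nu> + 1))) sums
        (\<Sum>r\<le>j. wt k lam j r * (x^r * mittag_leffler3 (real r + 1) \<nu> (real r * \<nu> + 1) (- L * x)))"
    by (intro sums_sum sums_mult mittag_sums[OF nu])
  moreover have "(\<Sum>r\<le>j. wt k lam j r * (ee L r m * x^m / Gamma (real m * \<nu> + 1)))
      = AA k lam L j m * x^m / Gamma (real m * \<nu> + 1)" for m
    unfolding AA_def by (simp add: sum_distrib_right sum_divide_distrib mult.assoc)
  moreover have "(\<Sum>r\<le>j. wt k lam j r * (x^r * mittag_leffler3 (real r + 1) \<nu> (real r * \<nu> + 1) (- L * x)))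
     = (\<Sum>r=0..j. \<Sum>\<alpha>\<in>multi_idx k r j. multinomial k r \<alpha> * (\<Prod>i=1..k. lam i ^ \<alpha> i) * x ^ r *
         mittag_leffler3 (real r + 1) \<nu> (real r * \<nu> + 1) (- L * x))"
    unfolding wt_def atLeast0AtMost by (simp add: sum_distrib_right mult.assoc)
  ultimately show ?thesis by simp
qed



theorem proposition2p3:
  fixes \<nu> :: real and k :: nat and lam :: "nat \<Rightarrow> real"
    and \<Lambda> :: real and p :: "nat \<Rightarrow> real \<Rightarrow> real"
  assumes nu: "0 < \<nu>" "\<nu> \<le> 1"
    and k: "k \<ge> 1"
    and lam: "\<forall>i\<in>{1..k}. lam i > 0"
    and Lam: "\<Lambda> = (\<Sum>i=1..k. lam i)"
    and p: "\<And>j t. p j t =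
      (\<Sum>r=0..j. \<Sum>\<alpha>\<in>multi_idx k r j.
         multinomial k r \<alpha> * (\<Prod>i=1..k. lam i ^ \<alpha> i) * (t powr \<nu>) ^ r *
         mittag_leffler3 (real r + 1) \<nu> (real r * \<nu> + 1) (- \<Lambda> * t powr \<nu>))"
  shows "p 0 0 = 1 \<and> (\<forall>j\<ge>1. p j 0 = 0)
    \<and> (\<forall>j. continuous_on {0..} (p j))
    \<and> (\<forall>j. \<forall>t>0. caputo_exists \<nu> (p j) t)
    \<and> (\<forall>t>0. caputo \<nu> (p 0) t = - \<Lambda> * p 0 t)
    \<and> (\<forall>j. 1 \<le> j \<and> j \<le> k - 1 \<longrightarrow> (\<forall>t>0.
          caputo \<nu> (p j) t = (\<Sum>r=1..j. lam r * p (j - r) t) - \<Lambda> * p j t))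
    \<and> (\<forall>j\<ge>k. \<forall>t>0.
          caputo \<nu> (p j) t = (\<Sum>r=1..k. lam r * p (j - r) t) - \<Lambda> * p j t)"
proof -
  define A where "A = AA k lam \<Lambda>"
  have L0: "\<Lambda> \<ge> 0" unfolding Lam using lam by (intro sum_nonneg) (fastforce intro: less_imp_le)
  have B0: "2 * \<Lambda> \<ge> 0" using L0 by simp
  have bnd: "\<bar>A j m\<bar> \<le> (2*\<Lambda>)^m" for j m unfolding A_def by (rule AA_bound[OF lam Lam])
  have pser: "p j t = mlser \<nu> (A j) (t powr \<nu>)" for j t
    unfolding p mlser_def A_def using sums_unique[OF p_series[OF nu, of k lam \<Lambda> j "t powr \<nu>"]] by simp
  have msum: "summable (\<lambda>m. A j m * x^m / Gamma (real m * \<nu> + 1))" for j x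
    by (rule mlser_summable[OF nu B0 bnd])
  have CS1: "continuous_on {0..} (p j)" for j
    by (rule caputo_series(1)[OF nu B0 bnd pser])
  have CS2: "caputo_exists \<nu> (p j) t \<and> caputo \<nu> (p j) t = mlser \<nu> (\<lambda>n. A j (Suc n)) (t powr \<nu>)"
    if "t > 0" for j t
    by (rule caputo_series(2)[OF nu B0 bnd pser that])
  have val0: "p j 0 = A j 0" for j
  proof -
    have "p j 0 = (\<Sum>m. (A j m / Gamma (real m * \<nu> + 1)) * 0 ^ m)"
      unfolding pser mlser_def using nu by simp
    also have "\<dots> = A j 0" by (subst powser_zero) simp
    finally show ?thesis .
  qed
  have rec: "caputo \<nu> (p j) t = (\<Sum>i\<in>{1..k}. if i \<le> j then lam i * p (j - i) t else 0) - \<Lambda> * p j t"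
    if t: "t > 0" for j t
  proof -
    define x where "x = t powr \<nu>"
    define G where "G = (\<lambda>m. Gamma (real m * \<nu> + 1))"
    have "(\<lambda>n. (\<Sum>i\<in>{1..k}. if i \<le> j then lam i * (A (j - i) n * x^n / G n) else 0) - \<Lambda> * (A j n * x^n / G n))
       sums ((\<Sum>i\<in>{1..k}. if i \<le> j then lam i * mlser \<nu> (A (j-i)) x else 0) - \<Lambda> * mlser \<nu> (A j) x)"
    proof (intro sums_diff sums_sum sums_mult)
      fix i assume "i \<in> {1..k}"
      show "(\<lambda>n. if i \<le> j then lam i * (A (j - i) n * x^n / G n) else 0)
            sums (if i \<le> j then lam i * mlser \<nu> (A (j-i)) x else 0)"
        using sums_mult[OF summable_sums[OF msum[of "j-i" x]], of "lam i"]
        unfolding mlser_def G_def by (cases "i \<le> j") simp_all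
    next
      show "(\<lambda>n. A j n * x^n / G n) sums mlser \<nu> (A j) x"
        unfolding mlser_def G_def by (rule summable_sums[OF msum])
    qed
    moreover have "(\<Sum>i\<in>{1..k}. if i \<le> j then lam i * (A (j - i) n * x^n / G n) else 0) - \<Lambda> * (A j n * x^n / G n)
        = A j (Suc n) * x^n / G n" for n
    proof -
      define S where "S = (\<Sum>i\<in>{1..k}. if i \<le> j then lam i * A (j - i) n else 0)"
      have e1: "S * (x^n / G n) = (\<Sum>i\<in>{1..k}. if i \<le> j then lam i * (A (j - i) n * x^n / G n) else 0)"
        unfolding S_def sum_distrib_right by (intro sum.cong refl) auto
      have e2: "A j (Suc n) = S - \<Lambda> * A j n" unfolding S_def A_def by (rule AA_Suc[OF lam])
      have "A j (Suc n) * x^n / G n = S * (x^n / G n) - \<Lambda> * (A j n * x^n / G n)"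
        unfolding e2 by (simp add: left_diff_distrib diff_divide_distrib)
      thus ?thesis unfolding e1 by simp
    qed
    ultimately have "(\<lambda>n. A j (Suc n) * x^n / G n)
        sums ((\<Sum>i\<in>{1..k}. if i \<le> j then lam i * mlser \<nu> (A (j-i)) x else 0) - \<Lambda> * mlser \<nu> (A j) x)"
      by simp
    hence "mlser \<nu> (\<lambda>n. A j (Suc n)) x
        = (\<Sum>i\<in>{1..k}. if i \<le> j then lam i * mlser \<nu> (A (j-i)) x else 0) - \<Lambda> * mlser \<nu> (A j) x"
      unfolding mlser_def G_def by (rule sums_unique[symmetric])
    thus ?thesis using CS2[OF t, of j] unfolding x_def pser by simp
  qed
  show ?thesis
  proof (intro conjI allI impI)
    show "p 0 0 = 1" unfolding val0 A_def AA_0 by simp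
  next
    fix j :: nat assume "1 \<le> j" thus "p j 0 = 0" unfolding val0 A_def AA_0 by simp
  next
    fix j show "continuous_on {0..} (p j)" by (rule CS1)
  next
    fix j :: nat and t :: real assume "t > 0" thus "caputo_exists \<nu> (p j) t" using CS2 by blast
  next
    fix t :: real assume t: "t > 0"
    show "caputo \<nu> (p 0) t = - \<Lambda> * p 0 t" unfolding rec[OF t] by simp
  next
    fix j :: nat and t :: real assume j: "1 \<le> j \<and> j \<le> k - 1" and t: "t > 0"
    have "(\<Sum>i\<in>{1..k}. if i \<le> j then lam i * p (j - i) t else 0) = (\<Sum>i\<in>{i\<in>{1..k}. i \<le> j}. lam i * p (j - i) t)"
      by (rule sum.inter_filter[symmetric]) simp
    also have "{i\<in>{1..k}. i \<le> j} = {1..j}" using j by auto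
    finally show "caputo \<nu> (p j) t = (\<Sum>r=1..j. lam r * p (j - r) t) - \<Lambda> * p j t"
      unfolding rec[OF t] by simp
  next
    fix j :: nat and t :: real assume j: "j \<ge> k" and t: "t > 0"
    have "(\<Sum>i\<in>{1..k}. if i \<le> j then lam i * p (j - i) t else 0) = (\<Sum>i\<in>{1..k}. lam i * p (j - i) t)"
      using j by (intro sum.cong refl) auto
    thus "caputo \<nu> (p j) t = (\<Sum>r=1..k. lam r * p (j - r) t) - \<Lambda> * p j t"
      unfolding rec[OF t] by simp
  qed
qed


end
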